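(* Let $\mu$ be a $\sigma$-finite measure on $[0,\infty)$ and let $F$ be a heavy-tailed distribution on $[0,\infty)$, absolutely continuous with respect to $\mu$ with density $f$. Let $\xi_1,\xi_2,\dots$ be i.i.d. with distribution $F$ and let $\tau$ be a positive integer-valued random variable independent of them, such that $S_\tau=\xi_1+\dots+\xi_\tau$ has a density $f^{*\tau}$ with respect to $\mu$. If $\mathbf E e^{\kappa\tau}<\infty$ for some $\kappa>0$, then $$\liminf_{x\to\infty}\frac{f^{*\tau}(x)}{f(x)}\le\mathbf E\tau.$$
   Context: A distribution $F$ on $[0,\infty)$ is heavy-tailed if $\int_0^\infty e^{\gamma x}F(dx)=\infty$ for every $\gamma>0$. *)

theory Defs
  imports "HOL-Probability.Probability"
begin

text \<open>A distribution F on [0,infinity) (a probability measure on the Borel sets of the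
reals giving no mass to the negative half-line) is heavy-tailed if its exponential
moments are all infinite.\<close>
definition heavy_tailed :: "real measure \<Rightarrow> bool" where
  "heavy_tailed F \<longleftrightarrow> (\<forall>\<gamma>>0. (\<integral>\<^sup>+ x. ennreal (exp (\<gamma> * x)) \<partial>F) = \<infinity>)"

end

theory Submission
  imports Defs
begin

lemma poly_bound:
  fixes d D :: real
  assumes "0 \<le> d" "d \<le> D"
  shows "((1+d)^n - 1 - n*d) * D^2 \<le> ((1+D)^n - 1 - n*D) * d^2"
proof (induction n)
  case 0 then show ?case by simp
next
  case (Suc n)
  have hd: "0 \<le> (1+d)^n - 1 - n*d" using Bernoulli_inequality[of d n] assms by simp
  have hD: "0 \<le> (1+D)^n - 1 - n*D" using Bernoulli_inequality[of D n] assms by simp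
  have eq: "\<And>x::real. (1+x)^Suc n - 1 - Suc n * x = (1+x)*((1+x)^n - 1 - n*x) + n*x^2"
    by (simp add: algebra_simps power2_eq_square)
  have "(1+d)*(((1+d)^n - 1 - n*d) * D^2) \<le> (1+D)*(((1+D)^n - 1 - n*D) * d^2)"
    by (rule mult_mono) (use Suc.IH assms hd in auto)
  moreover have "n*d^2*D^2 = n*D^2*d^2" by simp
  ultimately show ?case unfolding eq by (simp add: algebra_simps)
qed

definition vt :: "real \<Rightarrow> real \<Rightarrow> real \<Rightarrow> real" where
  "vt \<gamma> t x = exp (\<gamma> * min (max x 0) t)"

lemma vt_submult:
  assumes "0 \<le> \<gamma>" "0 \<le> t"
  shows "vt \<gamma> t (x + y) \<le> vt \<gamma> t x * vt \<gamma> t y"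
proof -
  have "min (max (x+y) 0) t \<le> min (max x 0) t + min (max y 0) t" using assms by linarith
  then have "\<gamma> * min (max (x+y) 0) t \<le> \<gamma> * min (max x 0) t + \<gamma> * min (max y 0) t"
    using assms by (metis distrib_left mult_left_mono)
  then show ?thesis unfolding vt_def by (simp add: exp_add[symmetric])
qed

lemma vt_sum:
  fixes x :: "nat \<Rightarrow> real"
  assumes "0 \<le> \<gamma>" "0 \<le> t"
  shows "vt \<gamma> t (\<Sum>i<n. x i) \<le> (\<Prod>i<n. vt \<gamma> t (x i))"
proof (induction n)
  case 0 then show ?case using assms by (simp add: vt_def)
next
  case (Suc n)
  have "vt \<gamma> t (\<Sum>i<Suc n. x i) \<le> vt \<gamma> t (\<Sum>i<n. x i) * vt \<gamma> t (x n)"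
    using vt_submult[OF assms] by simp
  also have "\<dots> \<le> (\<Prod>i<n. vt \<gamma> t (x i)) * vt \<gamma> t (x n)"
    using Suc.IH by (intro mult_right_mono) (auto simp: vt_def)
  finally show ?case by simp
qed

lemma vt_ge1: "0 \<le> \<gamma> \<Longrightarrow> 0 \<le> t \<Longrightarrow> 1 \<le> vt \<gamma> t x"
  unfolding vt_def by simp

lemma vt_le: "0 \<le> \<gamma> \<Longrightarrow> vt \<gamma> t x \<le> exp (\<gamma> * t)"
  unfolding vt_def by (simp add: mult_left_mono)

lemma vt_le2: "0 \<le> \<gamma> \<Longrightarrow> vt \<gamma> t x \<le> exp (\<gamma> * max x 0)"
  unfolding vt_def by (simp add: mult_left_mono)

lemma vt_diff:
  assumes "0 \<le> \<gamma>" "s \<le> t"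
  shows "vt \<gamma> t x - vt \<gamma> s x \<le> exp (\<gamma> * t) - exp (\<gamma> * s)"
    "vt \<gamma> s x \<le> vt \<gamma> t x"
proof -
  show "vt \<gamma> s x \<le> vt \<gamma> t x" unfolding vt_def using assms by (auto intro!: mult_left_mono)
  consider "max x 0 \<le> s" | "s \<le> max x 0" "max x 0 \<le> t" | "t \<le> max x 0" by linarith
  then show "vt \<gamma> t x - vt \<gamma> s x \<le> exp (\<gamma> * t) - exp (\<gamma> * s)"
  proof cases
    case 1 then show ?thesis unfolding vt_def using assms by (auto simp: min_def intro!: mult_left_mono)
  next
    case 2 then show ?thesis unfolding vt_def using assms by (auto simp: min_def intro!: mult_left_mono)
  next
    case 3 then show ?thesis unfolding vt_def using assms by (auto simp: min_def intro!: mult_left_mono)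
  qed
qed

lemma exp_lip:
  fixes \<gamma> s t :: real
  assumes "0 \<le> \<gamma>" "s \<le> t"
  shows "exp (\<gamma> * t) - exp (\<gamma> * s) \<le> \<gamma> * (t - s) * exp (\<gamma> * t)"
proof -
  have "1 - \<gamma> * (t - s) \<le> exp (- (\<gamma> * (t - s)))" using exp_ge_add_one_self[of "- (\<gamma> * (t - s))"] by simp
  then have "exp (\<gamma> * t) * (1 - \<gamma> * (t - s)) \<le> exp (\<gamma> * t) * exp (- (\<gamma> * (t - s)))" by simp
  also have "exp (\<gamma> * t) * exp (- (\<gamma> * (t - s))) = exp (\<gamma> * s)" by (simp add: exp_add[symmetric] algebra_simps)
  finally show ?thesis by (simp add: algebra_simps)
qed


theorem lemma2:
  fixes M :: "'a measure" and \<mu> F :: "real measure"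
    and f g :: "real \<Rightarrow> real"
    and \<xi> :: "nat \<Rightarrow> 'a \<Rightarrow> real" and \<tau> :: "'a \<Rightarrow> nat"
  assumes M: "prob_space M"
    and mu_sets: "sets \<mu> = sets borel" and mu_sf: "sigma_finite_measure \<mu>"
    and mu_supp: "emeasure \<mu> {..<0} = 0"
    and F_sets: "sets F = sets borel" and F_prob: "prob_space F"
    and F_supp: "emeasure F {..<0} = 0"
    and F_heavy: "heavy_tailed F"
    and f_meas: "f \<in> borel_measurable borel" and f_nonneg: "\<And>x. 0 \<le> f x"
    and F_dens: "F = density \<mu> (\<lambda>x. ennreal (f x))"
    and \<xi>_indep: "prob_space.indep_vars M (\<lambda>_. borel) \<xi> UNIV"
    and \<xi>_distr: "\<And>i. distr M borel (\<xi> i) = F"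
    and \<tau>_meas: "\<tau> \<in> measurable M (count_space UNIV)"
    and \<tau>_pos: "\<And>\<omega>. \<omega> \<in> space M \<Longrightarrow> 0 < \<tau> \<omega>"
    and \<tau>_indep: "prob_space.indep_vars M (\<lambda>_. borel)
                     (\<lambda>j. case j of None \<Rightarrow> (\<lambda>\<omega>. real (\<tau> \<omega>)) | Some i \<Rightarrow> \<xi> i) UNIV"
    and g_meas: "g \<in> borel_measurable borel" and g_nonneg: "\<And>x. 0 \<le> g x"
    and S_dens: "distr M borel (\<lambda>\<omega>. \<Sum>i<\<tau> \<omega>. \<xi> i \<omega>) = density \<mu> (\<lambda>x. ennreal (g x))"
    and exp_mom: "\<exists>\<kappa>>0. (\<integral>\<^sup>+ \<omega>. ennreal (exp (\<kappa> * real (\<tau> \<omega>))) \<partial>M) < \<infinity>"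
  shows "Liminf (at_top \<sqinter> principal {x. 0 < f x}) (\<lambda>x. ereal (g x / f x))
           \<le> ereal (\<integral>\<omega>. real (\<tau> \<omega>) \<partial>M)"
proof (rule ccontr)
  interpret M: prob_space M by (rule M)
  interpret F: prob_space F by (rule F_prob)
  note [measurable] = f_meas g_meas \<tau>_meas
  define S where "S = (\<lambda>\<omega>. \<Sum>i<\<tau> \<omega>. \<xi> i \<omega>)"
  have \<xi>_meas[measurable]: "\<And>i. \<xi> i \<in> borel_measurable M"
    using \<xi>_indep unfolding M.indep_vars_def by auto
  have \<tau>r_meas[measurable]: "(\<lambda>\<omega>. real (\<tau> \<omega>)) \<in> borel_measurable M" by measurable
  have S_meas[measurable]: "S \<in> borel_measurable M" unfolding S_def
    by (rule measurable_compose_countable[OF _ \<tau>_meas]) measurable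
  have Fm: "\<And>N. measurable F N = measurable borel N" by (rule measurable_cong_sets[OF F_sets refl])
  have mum: "\<And>N. measurable \<mu> N = measurable borel N" by (rule measurable_cong_sets[OF mu_sets refl])
  have vt_meas[measurable]: "\<And>\<gamma> t. vt \<gamma> t \<in> borel_measurable borel" unfolding vt_def by measurable
  obtain \<kappa> where \<kappa>: "\<kappa> > 0" "(\<integral>\<^sup>+ \<omega>. ennreal (exp (\<kappa> * real (\<tau> \<omega>))) \<partial>M) < \<infinity>"
    using exp_mom by auto
  have int_exp: "integrable M (\<lambda>\<omega>. exp (\<kappa> * real (\<tau> \<omega>)))"
    by (rule integrableI_nonneg) (use \<kappa> in auto)
  have int_tau: "integrable M (\<lambda>\<omega>. real (\<tau> \<omega>))"
  proof (rule Bochner_Integration.integrable_bound[OF integrable_mult_right[OF int_exp, of "1/\<kappa>"]])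
    show "AE \<omega> in M. norm (real (\<tau> \<omega>)) \<le> norm (1 / \<kappa> * exp (\<kappa> * real (\<tau> \<omega>)))"
    proof (intro AE_I2)
      fix \<omega>
      have "\<kappa> * real (\<tau> \<omega>) \<le> exp (\<kappa> * real (\<tau> \<omega>))"
        using exp_ge_add_one_self[of "\<kappa> * real (\<tau> \<omega>)"] by linarith
      then show "norm (real (\<tau> \<omega>)) \<le> norm (1 / \<kappa> * exp (\<kappa> * real (\<tau> \<omega>)))"
        using \<kappa> by (simp add: field_simps)
    qed
  qed simp
  define E where "E = (\<integral>\<omega>. real (\<tau> \<omega>) \<partial>M)"
  have E_nn: "0 \<le> E" unfolding E_def by simp
  assume "\<not> ?thesis"
  then have "ereal E < Liminf (at_top \<sqinter> principal {x. 0 < f x}) (\<lambda>x. ereal (g x / f x))"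
    unfolding E_def by simp
  then obtain b where b: "ereal E < ereal b" "ereal b < Liminf (at_top \<sqinter> principal {x. 0 < f x}) (\<lambda>x. ereal (g x / f x))"
    using ereal_dense2 by blast
  from less_LiminfD[OF b(2)] obtain N where N: "\<And>x. x \<ge> N \<Longrightarrow> 0 < f x \<Longrightarrow> b < g x / f x"
    unfolding eventually_inf_principal eventually_at_top_linorder by auto
  define x0 where "x0 = max N 1"
  have x0: "x0 \<ge> 1" unfolding x0_def by simp
  have gb: "\<And>x. x \<ge> x0 \<Longrightarrow> b * f x \<le> g x"
  proof -
    fix x assume x: "x \<ge> x0"
    show "b * f x \<le> g x"
    proof (cases "f x = 0")
      case True then show ?thesis using g_nonneg by simp
    next
      case False
      then have "0 < f x" using f_nonneg[of x] by simp
      with N[of x] x have "b < g x / f x" unfolding x0_def by simp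
      then show ?thesis using \<open>0 < f x\<close> by (simp add: pos_less_divide_eq less_imp_le)
    qed
  qed
  have Eb: "E < b" using b(1) by simp
  define \<epsilon> where "\<epsilon> = b - E"
  have \<epsilon>: "\<epsilon> > 0" "b > 0" using Eb E_nn unfolding \<epsilon>_def by auto
  define D where "D = exp \<kappa> - 1"
  have D: "D > 0" using \<kappa> unfolding D_def by simp
  define K where "K = (\<integral>\<omega>. exp (\<kappa> * real (\<tau> \<omega>)) \<partial>M)"
  have K: "K \<ge> 0" unfolding K_def by simp
  define K' where "K' = K / D^2"
  have K': "K' \<ge> 0" unfolding K'_def using K by simp
  define d where "d = min D (\<epsilon> / (2*(K'+1)))"
  have d: "d > 0" "d \<le> D" "K' * d \<le> \<epsilon> / 2"
  proof -
    show "d > 0" "d \<le> D" unfolding d_def using D \<epsilon> K' by auto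
    have "K' * d \<le> K' * (\<epsilon> / (2*(K'+1)))" unfolding d_def using K' by (intro mult_left_mono) auto
    also have "\<dots> \<le> \<epsilon> / 2" using K' \<epsilon> by (simp add: field_simps)
    finally show "K' * d \<le> \<epsilon> / 2" .
  qed
  define \<theta> where "\<theta> = \<epsilon> * d / (4 * b)"
  have \<theta>: "\<theta> > 0" unfolding \<theta>_def using \<epsilon> d by simp
  define \<gamma> where "\<gamma> = ln (1 + \<theta>) / x0"
  have \<gamma>: "\<gamma> > 0" "exp (\<gamma> * x0) = 1 + \<theta>" unfolding \<gamma>_def using \<theta> x0 by auto
  define m where "m = (\<lambda>t. \<integral>x. vt \<gamma> t x \<partial>F)"
  have vt_int: "integrable F (vt \<gamma> t)" for t
  proof (rule F.integrable_const_bound[where B="exp (\<gamma> * t)"])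
    show "AE x in F. norm (vt \<gamma> t x) \<le> exp (\<gamma> * t)"
      using vt_le[of \<gamma> t] \<gamma> by (auto simp: vt_def)
  qed (simp add: Fm)
  have m0: "m 0 = 1" unfolding m_def vt_def by (simp add: F.prob_space)
  have nn_eq: "\<And>t. (\<integral>\<^sup>+x. ennreal (vt \<gamma> t x) \<partial>F) = ennreal (m t)"
    unfolding m_def by (rule nn_integral_eq_integral[OF vt_int]) (auto simp: vt_def)
  have "\<exists>T\<ge>0. 1 + d \<le> m T"
  proof (rule ccontr)
    assume "\<not> ?thesis"
    hence lt: "\<And>n::nat. m (real n) < 1 + d" by (meson not_le of_nat_0_le_iff)
    have "(\<integral>\<^sup>+x. ennreal (exp (\<gamma> * x)) \<partial>F) \<le> (\<integral>\<^sup>+x. (SUP n. ennreal (vt \<gamma> (real n) x)) \<partial>F)"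
    proof (rule nn_integral_mono)
      fix x
      have "exp (\<gamma> * x) \<le> vt \<gamma> (real (nat \<lceil>max x 0\<rceil>)) x"
        unfolding vt_def using \<gamma> by (auto simp: min_def intro!: mult_left_mono)
      then show "ennreal (exp (\<gamma> * x)) \<le> (SUP n. ennreal (vt \<gamma> (real n) x))"
        by (intro SUP_upper2[of "nat \<lceil>max x 0\<rceil>"]) (auto intro: ennreal_leI)
    qed
    also have "\<dots> = (SUP n. (\<integral>\<^sup>+x. ennreal (vt \<gamma> (real n) x) \<partial>F))"
    proof (rule nn_integral_monotone_convergence_SUP)
      show "incseq (\<lambda>n x. ennreal (vt \<gamma> (real n) x))"
        unfolding incseq_def le_fun_def using \<gamma> by (auto intro!: ennreal_leI vt_diff(2))
    qed (simp add: Fm)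
    also have "\<dots> \<le> ennreal (1 + d)"
      unfolding nn_eq by (rule SUP_least, rule ennreal_leI, rule less_imp_le, rule lt)
    finally have "(\<integral>\<^sup>+x. ennreal (exp (\<gamma> * x)) \<partial>F) < \<infinity>"
      by (simp add: le_less_trans)
    with F_heavy \<gamma> show False unfolding heavy_tailed_def by auto
  qed
  then obtain T where T: "T \<ge> 0" "1 + d \<le> m T" by auto
  have mdiff: "0 \<le> m t - m s \<and> m t - m s \<le> \<gamma> * exp (\<gamma> * T) * (t - s)"
    if st: "0 \<le> s" "s \<le> t" "t \<le> T" for s t
  proof -
    have eq: "m t - m s = (\<integral>x. vt \<gamma> t x - vt \<gamma> s x \<partial>F)"
      unfolding m_def by (rule Bochner_Integration.integral_diff[symmetric]) (auto intro: vt_int)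
    have "(\<integral>x. vt \<gamma> t x - vt \<gamma> s x \<partial>F) \<le> (\<integral>x. exp (\<gamma> * t) - exp (\<gamma> * s) \<partial>F)"
      by (rule integral_mono) (use \<gamma> st in \<open>auto intro: vt_int vt_diff(1)\<close>)
    also have "\<dots> = exp (\<gamma> * t) - exp (\<gamma> * s)" by (simp add: F.prob_space)
    also have "\<dots> \<le> \<gamma> * (t - s) * exp (\<gamma> * t)" using exp_lip[of \<gamma> s t] \<gamma> st by simp
    also have "\<dots> \<le> \<gamma> * (t - s) * exp (\<gamma> * T)"
      using \<gamma> st by (intro mult_left_mono) (auto intro!: mult_left_mono)
    finally have 1: "m t - m s \<le> \<gamma> * exp (\<gamma> * T) * (t - s)" unfolding eq by (simp add: algebra_simps)
    have "0 \<le> (\<integral>x. vt \<gamma> t x - vt \<gamma> s x \<partial>F)"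
      using \<gamma> st vt_diff(2)[of \<gamma> s t] by (intro Bochner_Integration.integral_nonneg) auto
    with 1 show ?thesis unfolding eq by simp
  qed
  have "continuous_on {0..T} m"
  proof (rule lipschitz_on_continuous_on[OF lipschitz_onI])
    show "0 \<le> \<gamma> * exp (\<gamma> * T)" using \<gamma> by simp
    fix x y assume xy: "x \<in> {0..T}" "y \<in> {0..T}"
    show "dist (m x) (m y) \<le> \<gamma> * exp (\<gamma> * T) * dist x y"
    proof (cases "x \<le> y")
      case True then show ?thesis using mdiff[of x y] xy by (auto simp: dist_real_def)
    next
      case False then show ?thesis using mdiff[of y x] xy by (auto simp: dist_real_def)
    qed
  qed
  from IVT'[of m 0 "1 + d" T, OF _ T(2) T(1) this] m0 d
  obtain t where t: "0 \<le> t" "m t = 1 + d" by auto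
  define v where "v = vt \<gamma> t"
  have v1: "\<And>x. 1 \<le> v x" unfolding v_def using vt_ge1 \<gamma> t by auto
  have v2: "\<And>x. v x \<le> exp (\<gamma> * t)" unfolding v_def using vt_le \<gamma> by auto
  have v3: "\<And>x. x < x0 \<Longrightarrow> v x \<le> 1 + \<theta>"
  proof -
    fix x assume "x < x0"
    then have "\<gamma> * max x 0 \<le> \<gamma> * x0" using \<gamma>(1) x0 by (intro mult_left_mono) auto
    then have "exp (\<gamma> * max x 0) \<le> exp (\<gamma> * x0)" by simp
    then show "v x \<le> 1 + \<theta>" using vt_le2[of \<gamma> t x] \<gamma> unfolding v_def by simp
  qed
  have v_meas[measurable]: "v \<in> borel_measurable borel" unfolding v_def by simp
  have v_int: "integrable F v" unfolding v_def by (rule vt_int)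
  have md: "(\<integral>x. v x \<partial>F) = 1 + d" using t unfolding m_def v_def by simp
  have dens_int: "integral\<^sup>L (density \<mu> (\<lambda>x. ennreal (h x))) k = (\<integral>x. h x * k x \<partial>\<mu>)"
    "integrable (density \<mu> (\<lambda>x. ennreal (h x))) k \<longleftrightarrow> integrable \<mu> (\<lambda>x. h x * k x)"
    if "h \<in> borel_measurable borel" "\<And>x. 0 \<le> h x" "k \<in> borel_measurable borel" for h k :: "real \<Rightarrow> real"
    using that by (auto simp: mum integral_density integrable_density)
  have DS: "distr M borel S = density \<mu> (\<lambda>x. ennreal (g x))" using S_dens unfolding S_def .
  let ?Ev = "\<integral>\<omega>. v (S \<omega>) \<partial>M"
  have vS_int: "integrable M (\<lambda>\<omega>. v (S \<omega>))"
    by (rule M.integrable_const_bound[where B="exp (\<gamma> * t)"]) (use v1 v2 in \<open>auto intro!: AE_I2 simp: abs_of_nonneg[OF order_trans[OF zero_le_one v1]]\<close>)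
  have intF_v1: "integrable F (\<lambda>x. v x - 1)" using v_int by simp
  have intS_v1: "integrable (distr M borel S) (\<lambda>x. v x - 1)"
    by (subst integrable_distr_eq) (use vS_int in auto)
  have i1: "integrable \<mu> (\<lambda>x. f x * (v x - 1))"
    using intF_v1 dens_int(2)[of f "\<lambda>x. v x - 1"] f_nonneg unfolding F_dens[symmetric] by simp
  have i2: "integrable \<mu> (\<lambda>x. g x * (v x - 1))"
    using intS_v1 dens_int(2)[of g "\<lambda>x. v x - 1"] g_nonneg unfolding DS by simp
  have i3: "integrable \<mu> (\<lambda>x. f x * 1)"
    using dens_int(2)[of f "\<lambda>x. 1"] f_nonneg unfolding F_dens[symmetric] by simp
  have e1: "(\<integral>x. f x * (v x - 1) \<partial>\<mu>) = d"
  proof -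
    have "(\<integral>x. f x * (v x - 1) \<partial>\<mu>) = (\<integral>x. v x - 1 \<partial>F)"
      using dens_int(1)[of f "\<lambda>x. v x - 1"] f_nonneg unfolding F_dens[symmetric] by simp
    also have "\<dots> = d" using md v_int by (simp add: Bochner_Integration.integral_diff F.prob_space)
    finally show ?thesis .
  qed
  have e2: "(\<integral>x. g x * (v x - 1) \<partial>\<mu>) = ?Ev - 1"
  proof -
    have "(\<integral>x. g x * (v x - 1) \<partial>\<mu>) = (\<integral>x. v x - 1 \<partial>distr M borel S)"
      using dens_int(1)[of g "\<lambda>x. v x - 1"] g_nonneg unfolding DS by simp
    also have "\<dots> = (\<integral>\<omega>. v (S \<omega>) - 1 \<partial>M)" by (rule integral_distr) auto
    also have "\<dots> = ?Ev - 1" using vS_int by (simp add: Bochner_Integration.integral_diff M.prob_space)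
    finally show ?thesis .
  qed
  have e3: "(\<integral>x. f x * 1 \<partial>\<mu>) = 1"
  proof -
    have "(\<integral>x. f x * 1 \<partial>\<mu>) = (\<integral>x. 1 \<partial>F)"
      using dens_int(1)[of f "\<lambda>x. 1"] f_nonneg unfolding F_dens[symmetric] by simp
    then show ?thesis by (simp add: F.prob_space)
  qed
  have pw: "f x * (v x - 1) \<le> (1/b) * (g x * (v x - 1)) + \<theta> * (f x * 1)" for x
  proof (cases "x \<ge> x0")
    case True
    have "b * (f x * (v x - 1)) \<le> g x * (v x - 1)"
      using gb[OF True] v1[of x] by (simp add: mult.assoc[symmetric] mult_right_mono)
    then have "f x * (v x - 1) \<le> (1/b) * (g x * (v x - 1))" using \<epsilon> by (simp add: field_simps)
    moreover have "0 \<le> \<theta> * (f x * 1)" using \<theta> f_nonneg[of x] by simp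
    ultimately show ?thesis by linarith
  next
    case False
    have "f x * (v x - 1) \<le> f x * \<theta>" using v3[of x] False f_nonneg[of x] by (intro mult_left_mono) auto
    moreover have "0 \<le> (1/b) * (g x * (v x - 1))" using \<epsilon> g_nonneg[of x] v1[of x] by simp
    ultimately show ?thesis by (simp add: algebra_simps)
  qed
  have "d \<le> (1/b) * (?Ev - 1) + \<theta>"
  proof -
    have "(\<integral>x. f x * (v x - 1) \<partial>\<mu>) \<le> (\<integral>x. (1/b) * (g x * (v x - 1)) + \<theta> * (f x * 1) \<partial>\<mu>)"
      by (rule integral_mono) (use i1 i2 i3 pw in auto)
    also have "\<dots> = (1/b) * (\<integral>x. g x * (v x - 1) \<partial>\<mu>) + \<theta> * (\<integral>x. f x * 1 \<partial>\<mu>)"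
      using i2 i3 by (simp add: Bochner_Integration.integral_add)
    finally show ?thesis using e1 e2 e3 by simp
  qed
  define P where "P = (\<integral>\<omega>. (1 + d) ^ \<tau> \<omega> \<partial>M)"
  have pow_le: "(1 + d) ^ n \<le> exp (\<kappa> * real n)" for n
  proof -
    have "(1+d)^n \<le> (1+D)^n" using d by (intro power_mono) auto
    also have "(1+D)^n = exp (\<kappa> * real n)" unfolding D_def
      by (simp add: exp_of_nat_mult[symmetric] mult.commute)
    finally show ?thesis .
  qed
  have pow_meas[measurable]: "(\<lambda>\<omega>. (1 + d) ^ \<tau> \<omega>) \<in> borel_measurable M"
    by (rule measurable_compose_countable[where f="\<lambda>n \<omega>. (1 + d) ^ n", OF _ \<tau>_meas]) simp
  have pow_int: "integrable M (\<lambda>\<omega>. (1 + d) ^ \<tau> \<omega>)"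
    by (rule Bochner_Integration.integrable_bound[OF int_exp]) (use pow_le d in \<open>auto intro!: AE_I2\<close>)
  define A where "A = ennreal (1 + d)"
  have A: "(\<integral>\<^sup>+\<omega>. ennreal (v (\<xi> i \<omega>)) \<partial>M) = A" for i
  proof -
    have "(\<integral>\<^sup>+\<omega>. ennreal (v (\<xi> i \<omega>)) \<partial>M) = (\<integral>\<^sup>+x. ennreal (v x) \<partial>distr M borel (\<xi> i))"
      by (rule nn_integral_distr[symmetric]) auto
    also have "\<dots> = (\<integral>\<^sup>+x. ennreal (v x) \<partial>F)" using \<xi>_distr by simp
    also have "\<dots> = A" unfolding A_def v_def using nn_eq t by simp
    finally show ?thesis .
  qed
  define p where "p n = (\<integral>\<^sup>+\<omega>. indicator {real n} (real (\<tau> \<omega>)) \<partial>M)" for n :: nat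
  have key: "(\<integral>\<^sup>+\<omega>. indicator {real n} (real (\<tau> \<omega>)) * (\<Prod>i<n. ennreal (v (\<xi> i \<omega>))) \<partial>M) = p n * A ^ n" for n
  proof -
    define Y where "Y = (\<lambda>j::nat option. case j of None \<Rightarrow> (\<lambda>r::real. indicator {real n} r :: ennreal) | Some i \<Rightarrow> (\<lambda>x. ennreal (v x)))"
    define X0 where "X0 = (\<lambda>j. case j of None \<Rightarrow> (\<lambda>\<omega>. real (\<tau> \<omega>)) | Some i \<Rightarrow> \<xi> i)"
    define I where "I = insert None (Some ` {..<n})"
    have ind: "M.indep_vars (\<lambda>_. borel) (\<lambda>j \<omega>. Y j (X0 j \<omega>)) I"
    proof (rule M.indep_vars_subset[of _ _ UNIV])
      show "M.indep_vars (\<lambda>_. borel) (\<lambda>j \<omega>. Y j (X0 j \<omega>)) UNIV"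
        by (rule M.indep_vars_compose2[OF \<tau>_indep[unfolded X0_def[symmetric]]])
           (auto simp: Y_def split: option.split)
    qed simp
    have "(\<integral>\<^sup>+\<omega>. (\<Prod>j\<in>I. Y j (X0 j \<omega>)) \<partial>M) = (\<Prod>j\<in>I. \<integral>\<^sup>+\<omega>. Y j (X0 j \<omega>) \<partial>M)"
      by (rule M.indep_vars_nn_integral[OF _ ind]) (auto simp: I_def)
    moreover have "\<And>\<omega>. (\<Prod>j\<in>I. Y j (X0 j \<omega>)) = indicator {real n} (real (\<tau> \<omega>)) * (\<Prod>i<n. ennreal (v (\<xi> i \<omega>)))"
      by (simp add: I_def Y_def X0_def prod.reindex)
    moreover have "(\<Prod>j\<in>I. \<integral>\<^sup>+\<omega>. Y j (X0 j \<omega>) \<partial>M) = p n * A ^ n"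
      by (simp add: I_def Y_def X0_def prod.reindex p_def A)
    ultimately show ?thesis by simp
  qed
  have Apow: "A ^ n = ennreal ((1+d)^n)" for n
    unfolding A_def by (rule ennreal_power) (use d in auto)
  have sum1: "(\<Prod>i<\<tau> \<omega>. ennreal (v (\<xi> i \<omega>))) = (\<Sum>n. indicator {real n} (real (\<tau> \<omega>)) * (\<Prod>i<n. ennreal (v (\<xi> i \<omega>))))" for \<omega>
  proof -
    have "(\<lambda>n. indicator {real n} (real (\<tau> \<omega>)) * (\<Prod>i<n. ennreal (v (\<xi> i \<omega>)))) = (\<lambda>n. if n = \<tau> \<omega> then (\<Prod>i<n. ennreal (v (\<xi> i \<omega>))) else 0)"
      by (auto simp: indicator_def)
    then show ?thesis using sums_unique[OF sums_single[of "\<tau> \<omega>" "\<lambda>n. (\<Prod>i<n. ennreal (v (\<xi> i \<omega>)))"]] by simp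
  qed
  have sum2: "ennreal ((1 + d) ^ \<tau> \<omega>) = (\<Sum>n. indicator {real n} (real (\<tau> \<omega>)) * ennreal ((1 + d) ^ n))" for \<omega>
  proof -
    have "(\<lambda>n. indicator {real n} (real (\<tau> \<omega>)) * ennreal ((1 + d) ^ n)) = (\<lambda>n. if n = \<tau> \<omega> then ennreal ((1 + d) ^ n) else 0)"
      by (auto simp: indicator_def)
    then show ?thesis using sums_unique[OF sums_single[of "\<tau> \<omega>" "\<lambda>n. ennreal ((1 + d) ^ n)"]] by simp
  qed
  have "(\<integral>\<^sup>+\<omega>. ennreal (v (S \<omega>)) \<partial>M) \<le> (\<integral>\<^sup>+\<omega>. (\<Prod>i<\<tau> \<omega>. ennreal (v (\<xi> i \<omega>))) \<partial>M)"
  proof (rule nn_integral_mono)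
    fix \<omega>
    have "v (S \<omega>) \<le> (\<Prod>i<\<tau> \<omega>. v (\<xi> i \<omega>))" unfolding v_def S_def using vt_sum \<gamma> t by auto
    then show "ennreal (v (S \<omega>)) \<le> (\<Prod>i<\<tau> \<omega>. ennreal (v (\<xi> i \<omega>)))"
      using v1 by (subst prod_ennreal) (auto intro: order_trans[OF zero_le_one] intro!: ennreal_leI)
  qed
  also have "\<dots> = (\<Sum>n. (\<integral>\<^sup>+\<omega>. indicator {real n} (real (\<tau> \<omega>)) * (\<Prod>i<n. ennreal (v (\<xi> i \<omega>))) \<partial>M))"
    unfolding sum1 by (rule nn_integral_suminf) measurable
  also have "\<dots> = (\<Sum>n. (\<integral>\<^sup>+\<omega>. indicator {real n} (real (\<tau> \<omega>)) * ennreal ((1 + d) ^ n) \<partial>M))"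
    unfolding key Apow by (subst nn_integral_multc) (auto simp: p_def)
  also have "\<dots> = (\<integral>\<^sup>+\<omega>. ennreal ((1 + d) ^ \<tau> \<omega>) \<partial>M)"
    unfolding sum2 by (rule nn_integral_suminf[symmetric]) measurable
  finally have nnle: "(\<integral>\<^sup>+\<omega>. ennreal (v (S \<omega>)) \<partial>M) \<le> (\<integral>\<^sup>+\<omega>. ennreal ((1 + d) ^ \<tau> \<omega>) \<partial>M)" .
  have "ennreal ?Ev \<le> ennreal P"
  proof -
    have "(\<integral>\<^sup>+\<omega>. ennreal (v (S \<omega>)) \<partial>M) = ennreal ?Ev"
      by (rule nn_integral_eq_integral[OF vS_int]) (use v1 in \<open>auto intro: order_trans[OF zero_le_one]\<close>)
    moreover have "(\<integral>\<^sup>+\<omega>. ennreal ((1 + d) ^ \<tau> \<omega>) \<partial>M) = ennreal P"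
      unfolding P_def by (rule nn_integral_eq_integral[OF pow_int]) (use d in auto)
    ultimately show ?thesis using nnle by simp
  qed
  then have EvP: "?Ev \<le> P" using d unfolding P_def by (simp add: ennreal_le_iff)
  have pw2: "(1 + d) ^ n \<le> 1 + d * real n + (d^2 / D^2) * exp (\<kappa> * real n)" for n
  proof -
    have "((1+d)^n - 1 - n*d) * D^2 \<le> ((1+D)^n - 1 - n*D) * d^2"
      using poly_bound[of d D n] d by simp
    also have "\<dots> \<le> (1+D)^n * d^2"
    proof (rule mult_right_mono)
      have "0 \<le> real n * D" using D by simp
      then show "(1+D)^n - 1 - n*D \<le> (1+D)^n" by linarith
    qed simp
    also have "(1+D)^n = exp (\<kappa> * real n)" unfolding D_def
      by (simp add: exp_of_nat_mult[symmetric] mult.commute)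
    finally have "((1+d)^n - 1 - n*d) * D^2 \<le> exp (\<kappa> * real n) * d^2" .
    then have "(1+d)^n - 1 - n*d \<le> exp (\<kappa> * real n) * d^2 / D^2"
      using D by (simp add: pos_le_divide_eq)
    then show ?thesis by (simp add: algebra_simps)
  qed
  have "P \<le> (\<integral>\<omega>. 1 + d * real (\<tau> \<omega>) + (d^2 / D^2) * exp (\<kappa> * real (\<tau> \<omega>)) \<partial>M)"
    unfolding P_def by (rule integral_mono) (use pow_int int_tau int_exp pw2 in auto)
  also have "\<dots> = 1 + d * E + K' * d^2"
    using int_tau int_exp
    by (simp add: Bochner_Integration.integral_add M.prob_space E_def K'_def K_def)
  finally have PE: "P \<le> 1 + d * E + K' * d^2" .
  have "d \<le> (1/b) * (d * E + K' * d^2) + \<theta>" using \<open>d \<le> (1/b) * (?Ev - 1) + \<theta>\<close> EvP PE \<epsilon>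
    by (smt (verit) divide_pos_pos mult_left_mono)
  then have "b * d \<le> d * E + K' * d^2 + b * \<theta>" using \<epsilon> by (simp add: field_simps)
  moreover have "b * \<theta> = \<epsilon> * d / 4" unfolding \<theta>_def using \<epsilon> by simp
  moreover have "K' * d^2 \<le> \<epsilon> / 2 * d" using d by (simp add: power2_eq_square mult.assoc[symmetric] mult_right_mono)
  ultimately have "\<epsilon> * d \<le> \<epsilon> / 2 * d + \<epsilon> * d / 4" unfolding \<epsilon>_def by (simp add: algebra_simps)
  then show False using \<epsilon> d by simp
qed

end
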